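(* For all constants $0<\alpha\le\beta$ there is a constant $c>0$ such that the following holds. Let $k\le n$ be positive integers and let $h$ be an integer with $\alpha\log(n/k+1)\le h\le\beta\log(n/k+1)$, $h\ge2$ and $h\mid k$; set $\ell=k/h$. Suppose that in the $\ell$-variant cup game on $n$ cups some play of $T$ rounds ends with at least $k$ cups having fill at least $h\ell$. Then $T\ge c\,h\,\ell^3$.
   Context: The $\ell$-variant cup game on $n$ cups ($\ell$ a positive integer): $n$ cups with integer fills, all initially $0$. In each round the player chooses an integer $k'\ge0$ and an integer $q\ge1$ such that at least $2q$ cups have fill exactly $k'$. Among these cups, exactly $q$ are raised to $k'+1$; if $k'$ is a multiple of $\ell$ the other $q$ stay at $k'$, and otherwise $q$ other such cups are lowered to $k'-1$. (A cup that has reached a multiple of $\ell$ never goes below it.) *)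

theory Defs
  imports Complex_Main
begin

text \<open>Configurations of the cup game on n cups: cups are 0..n-1, fills are
  natural numbers (fills never become negative since 0 is a multiple of l).\<close>

definition cup_step :: "nat \<Rightarrow> nat \<Rightarrow> (nat \<Rightarrow> nat) \<Rightarrow> (nat \<Rightarrow> nat) \<Rightarrow> bool" where
  "cup_step l n f g \<longleftrightarrow>
     (\<exists>k' q U D. q \<ge> 1 \<and> U \<subseteq> {i. i < n \<and> f i = k'} \<and> D \<subseteq> {i. i < n \<and> f i = k'}
        \<and> U \<inter> D = {} \<and> card U = q \<and> card D = q
        \<and> (\<forall>i. g i = (if i \<in> U then k' + 1
                      else if i \<in> D then (if l dvd k' then k' else k' - 1)
                      else f i)))"

definition cup_play :: "nat \<Rightarrow> nat \<Rightarrow> nat \<Rightarrow> (nat \<Rightarrow> nat \<Rightarrow> nat) \<Rightarrow> bool" where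
  "cup_play l n T fs \<longleftrightarrow> fs 0 = (\<lambda>_. 0) \<and> (\<forall>t < T. cup_step l n (fs t) (fs (Suc t)))"

end

theory Submission
  imports Defs
begin

definition step_at :: "nat \<Rightarrow> nat \<Rightarrow> nat \<Rightarrow> (nat \<Rightarrow> nat) \<Rightarrow> (nat \<Rightarrow> nat) \<Rightarrow> bool" where
  "step_at l n k' f g \<longleftrightarrow> (\<exists>q U D. q \<ge> 1 \<and> U \<subseteq> {i. i < n \<and> f i = k'} \<and> D \<subseteq> {i. i < n \<and> f i = k'}
        \<and> U \<inter> D = {} \<and> card U = q \<and> card D = q
        \<and> (\<forall>i. g i = (if i \<in> U then k' + 1
                      else if i \<in> D then (if l dvd k' then k' else k' - 1)
                      else f i)))"

lemma cup_step_iff: "cup_step l n f g \<longleftrightarrow> (\<exists>k'. step_at l n k' f g)"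
  unfolding cup_step_def step_at_def by blast

lemma step_le:
  assumes "step_at l n k' f g" "f i \<le> t" "\<forall>i. f i \<le> t" shows "g i \<le> Suc t"
proof -
  obtain U D where U: "U \<subseteq> {i. i < n \<and> f i = k'}" and D: "D \<subseteq> {i. i < n \<and> f i = k'}"
    and g: "\<And>i. g i = (if i \<in> U then k' + 1 else if i \<in> D then (if l dvd k' then k' else k' - 1) else f i)"
    using assms(1) unfolding step_at_def by blast
  show ?thesis
  proof (cases "i \<in> U \<or> i \<in> D")
    case True
    then have "f i = k'" using U D by auto
    then show ?thesis using g[of i] assms(2) by auto
  next
    case False then show ?thesis using g[of i] assms(2) by auto
  qed
qed

lemma step_sticky:
  assumes "step_at l n k' f g" "0 < l" "m*l \<le> f i" shows "m*l \<le> g i"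
proof -
  obtain U D where U: "U \<subseteq> {i. i < n \<and> f i = k'}" and D: "D \<subseteq> {i. i < n \<and> f i = k'}"
    and g: "\<And>i. g i = (if i \<in> U then k' + 1 else if i \<in> D then (if l dvd k' then k' else k' - 1) else f i)"
    using assms(1) unfolding step_at_def by blast
  show ?thesis
  proof (cases "i \<in> U \<or> i \<in> D")
    case True
    then have fi: "f i = k'" using U D by auto
    show ?thesis
    proof (cases "i \<in> U")
      case True then show ?thesis using g[of i] fi assms(3) by auto
    next
      case False
      show ?thesis
      proof (cases "l dvd k'")
        case True then show ?thesis using g[of i] fi assms(3) by auto
      next
        case nd: False
        have "k' \<noteq> m*l" using nd by auto
        then show ?thesis using g[of i] fi assms(3) nd by auto
      qed
    qed
  next
    case False then show ?thesis using g[of i] assms(3) by auto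
  qed
qed

lemma play_step: "cup_play l n T fs \<Longrightarrow> t < T \<Longrightarrow> \<exists>k'. step_at l n k' (fs t) (fs (Suc t))"
  unfolding cup_play_def cup_step_iff by blast

lemma play_le: "cup_play l n T fs \<Longrightarrow> t \<le> T \<Longrightarrow> fs t i \<le> t"
proof (induction t arbitrary: i)
  case 0 then show ?case by (simp add: cup_play_def)
next
  case (Suc t)
  then obtain k' where "step_at l n k' (fs t) (fs (Suc t))" using play_step by (meson Suc_le_lessD)
  moreover have "\<forall>i. fs t i \<le> t" using Suc by simp
  ultimately show ?case using step_le by blast
qed

lemma play_sticky:
  assumes "cup_play l n T fs" "0 < l"
  shows "t \<le> t' \<Longrightarrow> t' \<le> T \<Longrightarrow> m*l \<le> fs t i \<Longrightarrow> m*l \<le> fs t' i"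
proof (induction t')
  case 0 then show ?case by simp
next
  case (Suc t')
  show ?case
  proof (cases "t = Suc t'")
    case True then show ?thesis using Suc by simp
  next
    case False
    then have "m*l \<le> fs t' i" using Suc by simp
    moreover obtain k' where "step_at l n k' (fs t') (fs (Suc t'))"
      using play_step[OF assms(1)] Suc by (meson Suc_le_lessD)
    ultimately show ?thesis using step_sticky assms(2) by blast
  qed
qed

lemma sum_change:
  fixes h1 h2 :: "nat \<Rightarrow> real"
  assumes fin: "finite S" and sub: "U \<subseteq> S" "D \<subseteq> S" and UD: "U \<inter> D = {}"
    and out: "\<And>a. a \<in> S \<Longrightarrow> a \<notin> U \<Longrightarrow> a \<notin> D \<Longrightarrow> h2 a = h1 a"
    and onU: "\<And>a. a \<in> U \<Longrightarrow> h1 a = u1 \<and> h2 a = u2"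
    and onD: "\<And>a. a \<in> D \<Longrightarrow> h1 a = d1 \<and> h2 a = d2"
  shows "(\<Sum>a\<in>S. h2 a) = (\<Sum>a\<in>S. h1 a) + real (card U) * (u2 - u1) + real (card D) * (d2 - d1)"
proof -
  have fU: "finite U" "finite D" using fin sub finite_subset by auto
  have split: "(\<Sum>a\<in>S. h a) = (\<Sum>a\<in>U. h a) + (\<Sum>a\<in>D. h a) + (\<Sum>a\<in>S-(U\<union>D). h a)" for h :: "nat \<Rightarrow> real"
  proof -
    have "(\<Sum>a\<in>S. h a) = (\<Sum>a\<in>S-(U\<union>D). h a) + (\<Sum>a\<in>U\<union>D. h a)"
      using sum.subset_diff[of "U\<union>D" S h] sub fin by auto
    moreover have "(\<Sum>a\<in>U\<union>D. h a) = (\<Sum>a\<in>U. h a) + (\<Sum>a\<in>D. h a)"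
      using sum.union_disjoint fU UD by blast
    ultimately show ?thesis by simp
  qed
  have a: "(\<Sum>a\<in>S-(U\<union>D). h2 a) = (\<Sum>a\<in>S-(U\<union>D). h1 a)" using out by (intro sum.cong) auto
  have b1: "(\<Sum>a\<in>U. h2 a) = real (card U) * u2" using onU by simp
  have b2: "(\<Sum>a\<in>U. h1 a) = real (card U) * u1" using onU by simp
  have c1: "(\<Sum>a\<in>D. h2 a) = real (card D) * d2" using onD by simp
  have c2: "(\<Sum>a\<in>D. h1 a) = real (card D) * d1" using onD by simp
  show ?thesis using split[of h1] split[of h2] a b1 b2 c1 c2 by (simp add: algebra_simps)
qed

lemma card_less_Suc: "card {t'. t' < Suc t \<and> P t'} = card {t'. t' < t \<and> P t'} + (if P t then 1 else 0)"
proof (cases "P t")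
  case True
  then have "{t'. t' < Suc t \<and> P t'} = insert t {t'. t' < t \<and> P t'}" by (auto simp: less_Suc_eq)
  then show ?thesis using True by simp
next
  case False
  then have "{t'. t' < Suc t \<and> P t'} = {t'. t' < t \<and> P t'}" by (auto simp: less_Suc_eq)
  then show ?thesis using False by simp
qed


definition yv :: "nat \<Rightarrow> nat \<Rightarrow> (nat \<Rightarrow> nat) \<Rightarrow> nat \<Rightarrow> nat" where
  "yv l j f a = min l (f a - j*l)"
definition LL :: "nat \<Rightarrow> nat \<Rightarrow> nat set \<Rightarrow> (nat \<Rightarrow> nat) \<Rightarrow> nat \<Rightarrow> nat" where
  "LL l j S f z = card {a\<in>S. yv l j f a \<le> z}"
definition Phi :: "nat \<Rightarrow> nat \<Rightarrow> nat set \<Rightarrow> real \<Rightarrow> (nat \<Rightarrow> nat) \<Rightarrow> real" where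
  "Phi l j S s f = (\<Sum>a\<in>S. real (yv l j f a)^2) - (\<Sum>a\<in>S. real (yv l j f a))
      + (\<Sum>z<l. real (LL l j S f z)^2) / (2*s)"

lemma step_phi:
  assumes st: "step_at l n k' f g" and l: "0 < l" and s: "0 < s" and fin: "finite S"
    and inS: "\<forall>i<n. j*l \<le> f i \<longrightarrow> i \<in> S"
  shows "Phi l j S s g \<le> Phi l j S s f + (if j*l \<le> k' \<and> k' < Suc j * l then s else 0)"
proof -
  obtain q U D where q: "q \<ge> 1" and U: "U \<subseteq> {i. i < n \<and> f i = k'}" and D: "D \<subseteq> {i. i < n \<and> f i = k'}"
    and UD: "U \<inter> D = {}" and cU: "card U = q" and cD: "card D = q"
    and g: "\<And>i. g i = (if i \<in> U then k' + 1 else if i \<in> D then (if l dvd k' then k' else k' - 1) else f i)"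
    using st unfolding step_at_def by blast
  have gout: "\<And>i. i \<notin> U \<Longrightarrow> i \<notin> D \<Longrightarrow> g i = f i" using g by simp
  have yout: "\<And>i. i \<notin> U \<Longrightarrow> i \<notin> D \<Longrightarrow> yv l j g i = yv l j f i" using gout by (simp add: yv_def)
  have fUD: "\<And>a. a \<in> U \<or> a \<in> D \<Longrightarrow> f a = k'" using U D by auto
  show ?thesis
  proof (cases "j*l \<le> k' \<and> k' < Suc j * l")
    case False
    have "yv l j g a = yv l j f a" for a
    proof (cases "a \<in> U \<or> a \<in> D")
      case False then show ?thesis using yout by simp
    next
      case True
      then have fa: "f a = k'" using fUD by blast
      from \<open>\<not> (j*l \<le> k' \<and> k' < Suc j * l)\<close> have "k' < j*l \<or> Suc j * l \<le> k'" by auto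
      then show ?thesis
      proof
        assume lt: "k' < j*l"
        then have "g a \<le> j*l" using g[of a] True fa by auto
        then show ?thesis using lt fa by (simp add: yv_def)
      next
        assume h: "Suc j * l \<le> k'"
        have "Suc j * l \<le> g a"
        proof (cases "a \<in> U")
          case True then show ?thesis using g[of a] h by simp
        next
          case False
          with True have aD: "a \<in> D" by simp
          show ?thesis
          proof (cases "l dvd k'")
            case True then show ?thesis using g[of a] aD False h by simp
          next
            case nd: False
            have "k' \<noteq> Suc j * l" using nd by (metis dvd_triv_right)
            then show ?thesis using g[of a] aD False h nd by simp
          qed
        qed
        then show ?thesis using h fa by (simp add: yv_def)
      qed
    qed
    then have "Phi l j S s g = Phi l j S s f" by (simp add: Phi_def LL_def)
    with False s show ?thesis by simp
  next
    case True
    define y where "y = k' - j*l"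
    have yl: "y < l" using True unfolding y_def by auto
    have k'y: "k' = j*l + y" using True unfolding y_def by auto
    have US: "U \<subseteq> S" using U inS True by auto
    have DS: "D \<subseteq> S" using D inS True by auto
    have fU: "finite U" "finite D" using fin US DS finite_subset by auto
    have yfU: "\<And>a. a \<in> U \<Longrightarrow> yv l j f a = y" "\<And>a. a \<in> D \<Longrightarrow> yv l j f a = y"
      using fUD yl k'y by (auto simp: yv_def)
    have ygU: "\<And>a. a \<in> U \<Longrightarrow> yv l j g a = Suc y"
      using fUD yl k'y g by (auto simp: yv_def)
    show ?thesis
    proof (cases "y = 0")
      case True
      have dv: "l dvd k'" using k'y True by simp
      have ygD: "\<And>a. a \<in> D \<Longrightarrow> yv l j g a = 0"
        using fUD g dv k'y True UD by (auto simp: yv_def)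
      have P: "(\<Sum>a\<in>S. real (yv l j g a)^2) = (\<Sum>a\<in>S. real (yv l j f a)^2) + real q"
        using sum_change[OF fin US DS UD, of "\<lambda>a. real (yv l j g a)^2" "\<lambda>a. real (yv l j f a)^2" 0 1 0 0]
          yout yfU ygU ygD True cU by simp
      have M: "(\<Sum>a\<in>S. real (yv l j g a)) = (\<Sum>a\<in>S. real (yv l j f a)) + real q"
        using sum_change[OF fin US DS UD, of "\<lambda>a. real (yv l j g a)" "\<lambda>a. real (yv l j f a)" 0 1 0 0]
          yout yfU ygU ygD True cU by simp
      have set0: "{a\<in>S. yv l j g a \<le> 0} = {a\<in>S. yv l j f a \<le> 0} - U"
        using yout yfU ygU ygD True using UD by (intro set_eqI; case_tac "x \<in> U"; case_tac "x \<in> D"; auto)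
      have setz: "z \<noteq> 0 \<Longrightarrow> {a\<in>S. yv l j g a \<le> z} = {a\<in>S. yv l j f a \<le> z}" for z
        using yout yfU ygU ygD True using UD by (intro set_eqI; case_tac "x \<in> U"; case_tac "x \<in> D"; auto)
      have Usub: "U \<subseteq> {a\<in>S. yv l j f a \<le> 0}" using US yfU True by auto
      have L0: "LL l j S g 0 = LL l j S f 0 - q"
        unfolding LL_def set0 using card_Diff_subset[OF fU(1) Usub] cU by simp
      have qL: "q \<le> LL l j S f 0" unfolding LL_def using card_mono[OF _ Usub] fin cU by simp
      define G where "G z = real (LL l j S g z)^2 - real (LL l j S f z)^2" for z
      have "(\<Sum>z<l. G z) = (\<Sum>z\<in>{0}. G z)"
        by (rule sum.mono_neutral_right) (use l setz in \<open>auto simp: G_def LL_def\<close>)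
      then have H: "(\<Sum>z<l. real (LL l j S g z)^2) = (\<Sum>z<l. real (LL l j S f z)^2) + G 0"
        by (simp add: G_def sum_subtractf)
      have G0: "G 0 \<le> 0"
        unfolding G_def L0 using qL by (simp add: of_nat_diff power_mono)
      have "G 0 / (2*s) \<le> 0" using G0 s by (simp add: divide_nonpos_pos)
      then have "Phi l j S s g \<le> Phi l j S s f"
        unfolding Phi_def P M H by (simp add: add_divide_distrib)
      then show ?thesis using s by simp
    next
      case False
      have ndv: "\<not> l dvd k'"
      proof
        assume "l dvd k'"
        then obtain m where m: "k' = l*m" by auto
        have e: "m*l = j*l + y" using m k'y by (simp add: mult.commute)
        have "j*l < m*l" using e False by linarith
        then have "j < m" by simp
        moreover have "m*l < Suc j * l" using m \<open>j*l \<le> k' \<and> k' < Suc j * l\<close> by (simp add: mult.commute)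
        then have "m < Suc j" by (metis mult_less_cancel2)
        ultimately show False by simp
      qed
      have ygD: "\<And>a. a \<in> D \<Longrightarrow> yv l j g a = y - 1"
        using fUD g ndv k'y False yl US UD by (auto simp: yv_def)
      have P: "(\<Sum>a\<in>S. real (yv l j g a)^2) = (\<Sum>a\<in>S. real (yv l j f a)^2) + 2 * real q"
      proof -
        have e: "real (y-1) = real y - 1" using False by simp
        have "(\<Sum>a\<in>S. real (yv l j g a)^2) = (\<Sum>a\<in>S. real (yv l j f a)^2)
           + real q * ((real y + 1)^2 - real y ^2) + real q * ((real y - 1)^2 - real y ^2)"
          using sum_change[OF fin US DS UD, of "\<lambda>a. real (yv l j g a)^2" "\<lambda>a. real (yv l j f a)^2"
              "real y ^2" "(real y + 1)^2" "real y ^2" "(real y - 1)^2"]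
            yout yfU ygU ygD cU cD e by simp
        then show ?thesis by (simp add: algebra_simps power2_eq_square)
      qed
      have M: "(\<Sum>a\<in>S. real (yv l j g a)) = (\<Sum>a\<in>S. real (yv l j f a))"
      proof -
        have e: "real (y-1) = real y - 1" using False by simp
        have "(\<Sum>a\<in>S. real (yv l j g a)) = (\<Sum>a\<in>S. real (yv l j f a))
           + real q * ((real y + 1) - real y) + real q * ((real y - 1) - real y)"
          using sum_change[OF fin US DS UD, of "\<lambda>a. real (yv l j g a)" "\<lambda>a. real (yv l j f a)"
              "real y" "real y + 1" "real y" "real y - 1"]
            yout yfU ygU ygD cU cD e by simp
        then show ?thesis by simp
      qed
      have sety: "{a\<in>S. yv l j g a \<le> y} = {a\<in>S. yv l j f a \<le> y} - U"
        using yout yfU ygU ygD False using UD by (intro set_eqI; case_tac "x \<in> U"; case_tac "x \<in> D"; auto)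
      have sety1: "{a\<in>S. yv l j g a \<le> y - 1} = {a\<in>S. yv l j f a \<le> y - 1} \<union> D"
        using yout yfU ygU ygD False DS using UD by (intro set_eqI; case_tac "x \<in> U"; case_tac "x \<in> D"; auto)
      have setz: "z \<noteq> y \<Longrightarrow> z \<noteq> y - 1 \<Longrightarrow> {a\<in>S. yv l j g a \<le> z} = {a\<in>S. yv l j f a \<le> z}" for z
        using yout yfU ygU ygD False using UD by (intro set_eqI; case_tac "x \<in> U"; case_tac "x \<in> D"; auto)
      have Usub: "U \<subseteq> {a\<in>S. yv l j f a \<le> y}" using US yfU by auto
      have Ddisj: "{a\<in>S. yv l j f a \<le> y - 1} \<inter> D = {}" using yfU False by fastforce
      have finS: "finite {a\<in>S. yv l j f a \<le> z}" for z using fin by simp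
      have Ly: "LL l j S g y = LL l j S f y - q"
        unfolding LL_def sety using card_Diff_subset[OF fU(1) Usub] cU by simp
      have Ly1: "LL l j S g (y-1) = LL l j S f (y-1) + q"
        unfolding LL_def sety1 using card_Un_disjoint[OF finS fU(2) Ddisj] cD by simp
      have big: "LL l j S f (y-1) + 2*q \<le> LL l j S f y"
      proof -
        have sub: "{a\<in>S. yv l j f a \<le> y - 1} \<union> (U \<union> D) \<subseteq> {a\<in>S. yv l j f a \<le> y}"
          using US DS yfU by auto
        have d2: "{a\<in>S. yv l j f a \<le> y - 1} \<inter> (U \<union> D) = {}" using yfU False by fastforce
        have "card ({a\<in>S. yv l j f a \<le> y - 1} \<union> (U \<union> D)) = LL l j S f (y-1) + 2*q"
          unfolding LL_def using card_Un_disjoint[OF finS _ d2] card_Un_disjoint[OF fU UD] fU cU cD by simp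
        then show ?thesis using card_mono[OF finS sub] unfolding LL_def by simp
      qed
      define G where "G z = real (LL l j S g z)^2 - real (LL l j S f z)^2" for z
      have "(\<Sum>z<l. G z) = (\<Sum>z\<in>{y-1, y}. G z)"
        by (rule sum.mono_neutral_right) (use yl setz in \<open>auto simp: G_def LL_def\<close>)
      also have "\<dots> = G (y-1) + G y" using False by simp
      finally have H: "(\<Sum>z<l. real (LL l j S g z)^2) = (\<Sum>z<l. real (LL l j S f z)^2) + (G (y-1) + G y)"
        by (simp add: G_def sum_subtractf)
      define a where "a = real (LL l j S f y)"
      define b where "b = real (LL l j S f (y-1))"
      define Q where "Q = real q"
      have ab: "b + 2*Q \<le> a" using big unfolding a_def b_def Q_def by linarith
      have Q0: "0 \<le> Q" unfolding Q_def by simp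
      have Gs: "G (y-1) + G y = (b + Q)^2 - b^2 + ((a - Q)^2 - a^2)"
        unfolding G_def Ly Ly1 a_def b_def Q_def using big by (simp add: of_nat_diff)
      have key: "G (y-1) + G y \<le> 2*s*(s - 2*Q)"
      proof -
        have "G (y-1) + G y = 2*Q*Q - 2*Q*(a - b)" unfolding Gs by (simp add: power2_eq_square algebra_simps)
        also have "\<dots> \<le> 2*Q*Q - 2*Q*(2*Q)" proof -
          have "Q * (2*Q) \<le> Q * (a - b)" using ab Q0 by (intro mult_left_mono) auto
          then show ?thesis by (simp add: algebra_simps)
        qed
        also have "\<dots> \<le> 2*s*(s - 2*Q)" proof -
          have "0 \<le> 2*(s - Q)^2" by simp
          then show ?thesis by (simp add: power2_eq_square algebra_simps)
        qed
        finally show ?thesis .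
      qed
      have "(G (y-1) + G y) / (2*s) \<le> s - 2*Q" using key s by (simp add: pos_divide_le_eq mult.commute)
      then have "Phi l j S s g \<le> Phi l j S s f + s"
        unfolding Phi_def P M H Q_def by (simp add: add_divide_distrib)
      then show ?thesis using True by simp
    qed
  qed
qed


lemma band:
  assumes play: "cup_play l n T fs" and l: "0 < l" and s: "0 < s"
    and K: "\<forall>t<T. step_at l n (K t) (fs t) (fs (Suc t))"
  shows "real (card {i. i < n \<and> Suc j * l \<le> fs T i}) * real l ^ 2
        \<le> real (card {i. i < n \<and> j*l \<le> fs T i}) * real l
          + real l * real (card {i. i < n \<and> j*l \<le> fs T i})^2 / (2*s)
          + s * real (card {t. t < T \<and> j*l \<le> K t \<and> K t < Suc j * l})"
proof -
  define S where "S = {i. i < n \<and> j*l \<le> fs T i}"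
  define S' where "S' = {i. i < n \<and> Suc j * l \<le> fs T i}"
  have fin: "finite S" unfolding S_def by simp
  have inv: "t \<le> T \<Longrightarrow> Phi l j S s (fs t) \<le> Phi l j S s (fs 0) + s * real (card {t'. t' < t \<and> j*l \<le> K t' \<and> K t' < Suc j * l})" for t
  proof (induction t)
    case 0 then show ?case by simp
  next
    case (Suc t)
    have tT: "t < T" using Suc by simp
    have inS: "\<forall>i<n. j*l \<le> fs t i \<longrightarrow> i \<in> S"
      unfolding S_def using play_sticky[OF play l, of t T j] tT by auto
    have "Phi l j S s (fs (Suc t)) \<le> Phi l j S s (fs t) + (if j*l \<le> K t \<and> K t < Suc j * l then s else 0)"
      using step_phi[OF _ l s fin inS] K tT by blast
    moreover have "Phi l j S s (fs t) \<le> Phi l j S s (fs 0) + s * real (card {t'. t' < t \<and> j*l \<le> K t' \<and> K t' < Suc j * l})"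
      using Suc tT by simp
    ultimately show ?case
      by (cases "j*l \<le> K t \<and> K t < Suc j * l") (simp_all only: card_less_Suc if_True if_False, simp_all add: algebra_simps)
  qed
  have f0: "fs 0 = (\<lambda>_. 0)" using play by (simp add: cup_play_def)
  have P0: "Phi l j S s (fs 0) = real l * real (card S)^2 / (2*s)"
    by (simp add: Phi_def LL_def f0 yv_def)
  have PT: "real (card S') * real l ^ 2 - real (card S) * real l \<le> Phi l j S s (fs T)"
  proof -
    have S'S: "S' \<subseteq> S" unfolding S'_def S_def by auto
    have y': "a \<in> S' \<Longrightarrow> yv l j (fs T) a = l" for a unfolding S'_def yv_def by auto
    have "real (card S') * real l ^ 2 = (\<Sum>a\<in>S'. real (yv l j (fs T) a)^2)" using y' by simp
    also have "\<dots> \<le> (\<Sum>a\<in>S. real (yv l j (fs T) a)^2)" by (rule sum_mono2[OF fin S'S]) simp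
    finally have A: "real (card S') * real l ^ 2 \<le> (\<Sum>a\<in>S. real (yv l j (fs T) a)^2)" .
    have "(\<Sum>a\<in>S. real (yv l j (fs T) a)) \<le> (\<Sum>a\<in>S. real l)" by (rule sum_mono) (simp add: yv_def)
    then have B: "(\<Sum>a\<in>S. real (yv l j (fs T) a)) \<le> real (card S) * real l" by simp
    have C: "0 \<le> (\<Sum>z<l. real (LL l j S (fs T) z)^2) / (2*s)" using s by (simp add: sum_nonneg)
    show ?thesis using A B C unfolding Phi_def by linarith
  qed
  show ?thesis using inv[of T] P0 PT unfolding S_def[symmetric] S'_def[symmetric] by linarith
qed


lemma sumR:
  fixes T :: nat and K :: "nat \<Rightarrow> nat"
  shows
  "(\<Sum>i<j. card {t. t < T \<and> i*l \<le> K t \<and> K t < Suc i * l}) = card {t. t < T \<and> K t < j*l}"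
proof (induction j)
  case 0 then show ?case by simp
next
  case (Suc j)
  have e: "{t. t < T \<and> K t < Suc j * l} = {t. t < T \<and> K t < j*l} \<union> {t. t < T \<and> j*l \<le> K t \<and> K t < Suc j * l}"
    by auto
  have "card {t. t < T \<and> K t < Suc j * l} = card {t. t < T \<and> K t < j*l} + card {t. t < T \<and> j*l \<le> K t \<and> K t < Suc j * l}"
  proof -
    have fP: "finite {t. t < T \<and> P t}" for P :: "nat \<Rightarrow> bool" by (rule finite_subset[of _ "{..<T}"]) auto
    show ?thesis unfolding e by (rule card_Un_disjoint) (use fP in auto)
  qed
  then show ?case using Suc by simp
qed

theorem lemma6p4:
  fixes \<alpha> \<beta> :: real
  assumes "0 < \<alpha>" and "\<alpha> \<le> \<beta>"
  shows "\<exists>c>0. \<forall>n k h T fs.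
           0 < k \<longrightarrow> k \<le> n \<longrightarrow>
           \<alpha> * ln (real n / real k + 1) \<le> real h \<longrightarrow>
           real h \<le> \<beta> * ln (real n / real k + 1) \<longrightarrow>
           h \<ge> 2 \<longrightarrow> h dvd k \<longrightarrow>
           cup_play (k div h) n T fs \<longrightarrow>
           card {i. i < n \<and> fs T i \<ge> h * (k div h)} \<ge> k \<longrightarrow>
           real T \<ge> c * real h * real (k div h) ^ 3"
proof -
  define \<rho> where "\<rho> = exp (-(1/\<alpha>) - 1)"
  have \<rho>0: "0 < \<rho>" unfolding \<rho>_def by simp
  define c where "c = \<rho>^2/4"
  show ?thesis
  proof (intro exI[of _ c] conjI allI impI)
    show "0 < c" unfolding c_def using \<rho>0 by simp
    fix n k h T fs
    assume k0: "0 < k" and kn: "k \<le> n" and ha: "\<alpha> * ln (real n / real k + 1) \<le> real h"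
      and h2: "h \<ge> 2" and hk: "h dvd k" and play: "cup_play (k div h) n T fs"
      and cardk: "card {i. i < n \<and> fs T i \<ge> h * (k div h)} \<ge> k"
    define l where "l = k div h"
    have hl: "h * l = k" unfolding l_def using hk by simp
    have l0: "0 < l" using hl k0 by (cases l) auto
    have Tk: "k \<le> T"
    proof -
      have "{i. i < n \<and> fs T i \<ge> h * l} \<noteq> {}" using cardk k0 unfolding l_def by (metis card.empty not_le)
      then obtain i where "h * l \<le> fs T i" by auto
      moreover have "fs T i \<le> T" using play_le[OF play] by simp
      ultimately show ?thesis using hl by simp
    qed
    show "c * real h * real (k div h) ^ 3 \<le> real T"
    proof (cases "real l < 2/\<rho>")
      case True
      have "\<rho> * real l < 2" using True \<rho>0 by (simp add: field_simps)
      then have "(\<rho> * real l)^2 < 2^2" using \<rho>0 by (intro power_strict_mono) auto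
      then have cl: "c * real l ^ 2 \<le> 1" unfolding c_def by (simp add: power_mult_distrib)
      have "c * real h * real l ^ 3 = (c * real l ^ 2) * (real h * real l)" by (simp add: power3_eq_cube power2_eq_square)
      also have "\<dots> \<le> 1 * (real h * real l)" using cl by (intro mult_right_mono) auto
      also have "\<dots> = real k" using hl by (simp flip: of_nat_mult)
      also have "\<dots> \<le> real T" using Tk by simp
      finally show ?thesis unfolding l_def .
    next
      case False
      then have l\<rho>: "2 \<le> \<rho> * real l" using \<rho>0 by (simp add: field_simps)
      have "\<forall>t. \<exists>k'. t < T \<longrightarrow> step_at l n k' (fs t) (fs (Suc t))"
        using play_step[OF play[folded l_def]] by blast
      then obtain K where K: "\<forall>t<T. step_at l n (K t) (fs t) (fs (Suc t))" by metis
      define A where "A j = card {i. i < n \<and> j*l \<le> fs T i}" for j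
      define R where "R j = card {t. t < T \<and> j*l \<le> K t \<and> K t < Suc j * l}" for j
      define L where "L = real l"
      have L0: "0 < L" unfolding L_def using l0 by simp
      define E where "E = \<rho>^2 * L^3"
      have E0: "0 < E" unfolding E_def using L0 \<rho>0 by simp
      have stepA: "real (A (Suc j)) \<le> real (A j) * \<rho> * exp (real (R j) / E)" for j
      proof (cases "A j = 0")
        case True
        have "A (Suc j) \<le> A j" unfolding A_def by (intro card_mono) auto
        then show ?thesis using True by simp
      next
        case False
        define a where "a = real (A j)"
        have a0: "0 < a" using False unfolding a_def by simp
        define s where "s = a / (\<rho> * L)"
        have s0: "0 < s" unfolding s_def using a0 \<rho>0 L0 by simp
        have B: "real (A (Suc j)) * L^2 \<le> a * L + L * a^2 / (2*s) + s * real (R j)"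
          using band[OF play[folded l_def] l0 s0 K, of j] unfolding A_def R_def a_def L_def by simp
        have e1: "L * a^2 / (2*s) = a * \<rho> * L^2 / 2" unfolding s_def using a0 \<rho>0 L0
          by (simp add: field_simps power2_eq_square)
        have e2: "s * real (R j) = a * \<rho> * L^2 * (real (R j) / E)" unfolding s_def E_def using a0 \<rho>0 L0
          by (simp add: field_simps power2_eq_square power3_eq_cube)
        have e3: "a * L \<le> a * \<rho> * L^2 / 2"
        proof -
          have "a * L * 2 \<le> a * L * (\<rho> * L)" using l\<rho> a0 L0 by (intro mult_left_mono) (auto simp: L_def)
          then show ?thesis by (simp add: power2_eq_square algebra_simps)
        qed
        have "real (A (Suc j)) * L^2 \<le> (a * \<rho> * (1 + real (R j) / E)) * L^2"
          using B e1 e2 e3 by (simp add: algebra_simps)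
        then have "real (A (Suc j)) \<le> a * \<rho> * (1 + real (R j) / E)" using L0 by simp
        also have "\<dots> \<le> a * \<rho> * exp (real (R j) / E)"
          using a0 \<rho>0 exp_ge_add_one_self[of "real (R j) / E"] by (intro mult_left_mono) auto
        finally show ?thesis unfolding a_def .
      qed
      have indA: "real (A j) \<le> real n * \<rho>^j * exp ((\<Sum>i<j. real (R i)) / E)" for j
      proof (induction j)
        case 0
        have "A 0 = n" unfolding A_def by simp
        then show ?case by simp
      next
        case (Suc j)
        have "real (A (Suc j)) \<le> real (A j) * \<rho> * exp (real (R j) / E)" by (rule stepA)
        also have "\<dots> \<le> (real n * \<rho>^j * exp ((\<Sum>i<j. real (R i)) / E)) * \<rho> * exp (real (R j) / E)"
          using Suc \<rho>0 by (intro mult_right_mono) auto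
        also have "\<dots> = real n * \<rho>^Suc j * exp ((\<Sum>i<Suc j. real (R i)) / E)"
          by (simp add: exp_add[symmetric] add_divide_distrib algebra_simps)
        finally show ?case .
      qed
      have sR: "(\<Sum>i<h. real (R i)) \<le> real T"
      proof -
        have "(\<Sum>i<h. R i) = card {t. t < T \<and> K t < h*l}" unfolding R_def by (rule sumR)
        also have "\<dots> \<le> card {..<T}" by (intro card_mono) auto
        finally show ?thesis by (simp flip: of_nat_sum)
      qed
      have kA: "k \<le> A h" unfolding A_def using cardk unfolding l_def by simp
      have nk: "real n \<le> real k * exp (real h / \<alpha>)"
      proof -
        have pos: "0 < real n / real k + 1" proof -
          have "0 \<le> real n / real k" by simp
          then show ?thesis by linarith
        qed
        have "ln (real n / real k + 1) \<le> real h / \<alpha>" using ha assms(1) by (simp add: field_simps mult.commute)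
        then have "real n / real k + 1 \<le> exp (real h / \<alpha>)" using pos by (metis exp_ln exp_le_cancel_iff)
        then have "real n / real k \<le> exp (real h / \<alpha>)" by linarith
        then show ?thesis using k0 by (simp add: field_simps)
      qed
      have rh: "\<rho>^h = exp (- (real h / \<alpha>) - real h)"
        unfolding \<rho>_def by (simp add: exp_of_nat_mult[symmetric] field_simps)
      have "real k \<le> real n * \<rho>^h * exp ((\<Sum>i<h. real (R i)) / E)" using indA[of h] kA by linarith
      also have "\<dots> \<le> real n * \<rho>^h * exp (real T / E)"
        using sR E0 \<rho>0 by (intro mult_left_mono) (auto simp: divide_right_mono)
      also have "\<dots> \<le> real k * exp (real h / \<alpha>) * \<rho>^h * exp (real T / E)"
        using nk \<rho>0 by (intro mult_right_mono) auto
      also have "\<dots> = real k * exp (real T / E - real h)"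
        unfolding rh by (simp add: exp_add[symmetric] exp_diff)
      finally have "1 \<le> exp (real T / E - real h)" using k0 by simp
      then have "real h \<le> real T / E" by simp
      then have "real h * E \<le> real T" using E0 by (simp add: field_simps)
      then have "\<rho>^2 * real h * L^3 \<le> real T" unfolding E_def by (simp add: algebra_simps)
      moreover have "c * real h * L^3 \<le> \<rho>^2 * real h * L^3" unfolding c_def using L0 by simp
      ultimately show ?thesis unfolding L_def l_def by linarith
    qed
  qed
qed

end
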